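(* Let $X \subseteq 2^\omega$. The following conditions are equivalent: (1) $X$ is an $R$ set; (2) for every Borel function $x \mapsto f^x$ from $2^\omega$ to $\omega^\omega$ there exists $g \in \omega^\omega$ such that for every $x \in X$ there are infinitely many $n$ with $f^x(n) = g(n)$; (3) every Borel image of $X$ has Rothberger's property, i.e. for every Borel function $F$ from $2^\omega$ into a Polish space, the set $F[X]$ has Rothberger's property.
   Context: For $H \subseteq 2^\omega \times 2^\omega$ and $x \in 2^\omega$, $(H)_x = \{y \in 2^\omega : \langle x,y\rangle \in H\}$. A set $X \subseteq 2^\omega$ is an $R$ set if for every Borel set $H \subseteq 2^\omega \times 2^\omega$ such that $(H)_x$ is meager for all $x \in 2^\omega$, we have $\bigcup_{x \in X} (H)_x \neq 2^\omega$. A subset $Y$ of a topological space has Rothberger's property (is a $C''$ set) if for every sequence $\{\mathcal{G}_n : n \in \omega\}$ of covers of $Y$ by open sets there exist $U_n \in \mathcal{G}_n$ ($n\in\omega$) with $Y \subseteq \bigcup_{n\in\omega} U_n$. *)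

theory Defs
  imports "HOL-Analysis.Analysis"
begin

text \<open>Cantor space 2^omega is the type nat => bool, Baire space omega^omega is nat => nat,
  both with the product topology (Function_Topology); Borel sets/functions are taken
  w.r.t. the Borel sigma-algebras of these topological types.\<close>

definition section_at :: "('a \<times> 'b) set \<Rightarrow> 'a \<Rightarrow> 'b set" where
  "section_at H x = {y. (x, y) \<in> H}"

definition nowhere_dense :: "'a::topological_space set \<Rightarrow> bool" where
  "nowhere_dense A \<longleftrightarrow> interior (closure A) = {}"

definition meager :: "'a::topological_space set \<Rightarrow> bool" where
  "meager A \<longleftrightarrow> (\<exists>N :: nat \<Rightarrow> 'a set. (\<forall>n. nowhere_dense (N n)) \<and> A \<subseteq> (\<Union>n. N n))"

definition R_set :: "(nat \<Rightarrow> bool) set \<Rightarrow> bool" where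
  "R_set X \<longleftrightarrow>
     (\<forall>H \<in> sets (borel :: ((nat \<Rightarrow> bool) \<times> (nat \<Rightarrow> bool)) measure).
        (\<forall>x. meager (section_at H x)) \<longrightarrow> (\<Union>x\<in>X. section_at H x) \<noteq> UNIV)"

definition rothberger :: "'a::topological_space set \<Rightarrow> bool" where
  "rothberger Y \<longleftrightarrow>
     (\<forall>G :: nat \<Rightarrow> 'a set set.
        (\<forall>n. G n \<noteq> {} \<and> (\<forall>U\<in>G n. open U) \<and> Y \<subseteq> \<Union>(G n)) \<longrightarrow>
        (\<exists>U :: nat \<Rightarrow> 'a set. (\<forall>n. U n \<in> G n) \<and> Y \<subseteq> (\<Union>n. U n)))"

end

theory Submission
  imports Defs "HOL-Library.Countable"
begin

definition cyl :: "bool list \<Rightarrow> (nat \<Rightarrow> bool) set" where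
  "cyl s = {y. \<forall>i<length s. y i = s!i}"
definition pre :: "(nat \<Rightarrow> 'a) \<Rightarrow> nat \<Rightarrow> 'a list" where
  "pre y n = map y [0..<n]"
definition ext :: "bool list \<Rightarrow> nat \<Rightarrow> bool" where
  "ext s i = (if i < length s then s!i else False)"

lemma length_pre[simp]: "length (pre y n) = n" by (simp add: pre_def)
lemma nth_pre[simp]: "i < n \<Longrightarrow> pre y n ! i = y i" by (simp add: pre_def)
lemma cyl_pre_iff: "z \<in> cyl (pre y n) \<longleftrightarrow> (\<forall>i<n. z i = y i)" by (simp add: cyl_def)
lemma pre_in_cyl[simp]: "y \<in> cyl (pre y n)" by (simp add: cyl_def)
lemma ext_in_cyl[simp]: "ext s \<in> cyl s" by (simp add: cyl_def ext_def)
lemma take_pre: "take i (pre y n) = pre y (min i n)"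
  by (cases "i \<le> n") (auto simp: pre_def take_map take_upt min_def)
lemma pre_mono_cyl: "m \<le> n \<Longrightarrow> cyl (pre y n) \<subseteq> cyl (pre y m)"
  by (auto simp: cyl_def)
lemma cyl_append: "cyl (s @ t) \<subseteq> cyl s"
  by (auto simp: cyl_def nth_append)
lemma pre_Suc: "pre y (Suc n) = pre y n @ [y n]" by (simp add: pre_def)
lemma pre_add: "pre y (n + m) = pre y n @ map (\<lambda>j. y (n + j)) [0..<m]"
  by (induction m) (auto simp: pre_def)

lemma open_coord: "open {y::nat\<Rightarrow>'a::topological_space. y i \<in> S}" if "open S"
proof -
  have "{y::nat\<Rightarrow>'a. y i \<in> S} = (\<lambda>y. y i) -` S" by auto
  then show ?thesis using that continuous_on_product_coordinates
    by (metis open_vimage)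
qed

lemma closed_coord: "closed {y::nat\<Rightarrow>'a::topological_space. y i \<in> S}" if "closed S"
proof -
  have "{y::nat\<Rightarrow>'a. y i \<in> S} = (\<lambda>y. y i) -` S" by auto
  then show ?thesis using that continuous_on_product_coordinates
    by (metis closed_vimage)
qed

lemma cyl_Int: "cyl s = (\<Inter>i\<in>{..<length s}. {y. y i \<in> {s!i}})"
  by (auto simp: cyl_def)

lemma open_cyl[simp]: "open (cyl s)"
  unfolding cyl_Int by (intro open_INT finite_lessThan ballI open_coord) (simp add: open_discrete)

lemma closed_cyl[simp]: "closed (cyl s)"
  unfolding cyl_Int by (intro closed_INT ballI closed_coord) (simp add: closed_def open_discrete)

lemma cyl_base:
  assumes "open (U :: (nat \<Rightarrow> bool) set)" "y \<in> U"
  shows "\<exists>n. cyl (pre y n) \<subseteq> U"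
proof -
  have "openin (product_topology (\<lambda>_. euclidean) UNIV) U"
    using assms(1) unfolding open_fun_def by simp
  from product_topology_open_contains_basis[OF this assms(2)] obtain X where
    X: "y \<in> Pi\<^sub>E UNIV X" "\<forall>i. openin euclidean (X i)"
       "finite {i. X i \<noteq> topspace euclidean}" "Pi\<^sub>E UNIV X \<subseteq> U" by auto
  obtain n where n: "{i. X i \<noteq> UNIV} \<subseteq> {..<n}"
    using finite_nat_bounded X(3) by auto
  have "cyl (pre y n) \<subseteq> Pi\<^sub>E UNIV X"
  proof
    fix z assume z: "z \<in> cyl (pre y n)"
    have "z i \<in> X i" for i
    proof (cases "X i = UNIV")
      case False
      then have "i < n" using n by auto
      then show ?thesis using z X(1) by (auto simp: cyl_pre_iff)
    qed simp
    then show "z \<in> Pi\<^sub>E UNIV X" by auto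
  qed
  then show ?thesis using X(4) by blast
qed

lemma cyl_base_ge:
  assumes "open (U :: (nat \<Rightarrow> bool) set)" "y \<in> U"
  shows "\<exists>n\<ge>m. cyl (pre y n) \<subseteq> U"
proof -
  obtain n where "cyl (pre y n) \<subseteq> U" using cyl_base[OF assms] by blast
  then have "cyl (pre y (max n m)) \<subseteq> U" using pre_mono_cyl[of n "max n m" y] by auto
  then show ?thesis by (intro exI[of _ "max n m"]) auto
qed

lemma pre_of_cyl: "y \<in> cyl v \<Longrightarrow> pre y (length v) = v"
  by (auto simp: cyl_def intro: nth_equalityI)

lemma pre_ext[simp]: "pre (ext s) (length s) = s"
  using pre_of_cyl[OF ext_in_cyl] .

lemma take_pre_cyl: "z \<in> cyl s \<Longrightarrow> length s \<le> n \<Longrightarrow> take (length s) (pre z n) = s"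
  by (simp add: take_pre min_def pre_of_cyl)

lemma cyl_nonempty: "cyl s \<noteq> {}" using ext_in_cyl by blast

lemma nd_avoid:
  assumes "nowhere_dense N"
  shows "\<exists>t. t \<noteq> [] \<and> cyl (s @ t) \<inter> N = {}"
proof -
  have "\<not> cyl s \<subseteq> closure N"
  proof
    assume "cyl s \<subseteq> closure N"
    then have "cyl s \<subseteq> interior (closure N)" by (simp add: interior_maximal)
    then show False using assms cyl_nonempty[of s] unfolding nowhere_dense_def by auto
  qed
  then obtain z where z: "z \<in> cyl s" "z \<notin> closure N" by auto
  have "open (cyl s - closure N)" by (simp add: open_Diff)
  then obtain n where n: "n \<ge> Suc (length s)" "cyl (pre z n) \<subseteq> cyl s - closure N"
    using cyl_base_ge[of "cyl s - closure N" z "Suc (length s)"] z by auto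
  define t where "t = drop (length s) (pre z n)"
  have "take (length s) (pre z n) = s" using take_pre_cyl[OF z(1), of n] n(1) by simp
  then have "pre z n = s @ t" unfolding t_def by (metis append_take_drop_id)
  moreover have "t \<noteq> []" using n(1) unfolding t_def by simp
  moreover have "cyl (pre z n) \<inter> N = {}" using n(2) closure_subset by blast
  ultimately show ?thesis by metis
qed

lemma baire:
  fixes U :: "(nat \<Rightarrow> bool) set" and N :: "nat \<Rightarrow> (nat \<Rightarrow> bool) set"
  assumes "open U" "U \<noteq> {}" "\<And>n. nowhere_dense (N n)"
  shows "\<not> U \<subseteq> (\<Union>n. N n)"
proof
  assume sub: "U \<subseteq> (\<Union>n. N n)"
  obtain z where "z \<in> U" using assms(2) by auto
  then obtain n0 where n0: "cyl (pre z n0) \<subseteq> U" using cyl_base assms(1) by blast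
  have "\<forall>s n. \<exists>t. t \<noteq> [] \<and> cyl (s @ t) \<inter> N n = {}" using nd_avoid assms(3) by blast
  then obtain nxt where nxt: "\<And>s n. nxt s n \<noteq> [] \<and> cyl (s @ nxt s n) \<inter> N n = {}"
    by metis
  define sq where "sq = rec_nat (pre z n0) (\<lambda>n s. s @ nxt s n)"
  have sq0: "sq 0 = pre z n0" and sqS: "\<And>n. sq (Suc n) = sq n @ nxt (sq n) n"
    by (simp_all add: sq_def)
  have len: "length (sq n) \<ge> n" for n
  proof (induction n)
    case (Suc n)
    have "length (nxt (sq n) n) > 0" using nxt[of "sq n" n] by simp
    moreover have "length (sq (Suc n)) = length (sq n) + length (nxt (sq n) n)" by (simp add: sqS)
    ultimately show ?case using Suc by linarith
  qed simp
  have pref: "\<exists>r. sq (m + d) = sq m @ r" for m d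
  proof (induction d)
    case (Suc d) then show ?case by (auto simp: sqS)
  qed simp
  define y where "y i = sq (Suc i) ! i" for i
  have ycyl: "y \<in> cyl (sq n)" for n
  proof -
    have "y i = sq n ! i" if "i < length (sq n)" for i
    proof -
      obtain r1 where r1: "sq (Suc i + n) = sq (Suc i) @ r1" using pref by blast
      obtain r2 where r2: "sq (n + Suc i) = sq n @ r2" using pref by blast
      have "i < length (sq (Suc i))" using len[of "Suc i"] by simp
      then have "y i = sq (Suc i + n) ! i" unfolding y_def r1 by (simp add: nth_append)
      also have "\<dots> = sq n ! i" using r2 that by (simp add: add.commute nth_append)
      finally show ?thesis .
    qed
    then show ?thesis by (simp add: cyl_def)
  qed
  have "y \<in> U" using ycyl[of 0] n0 sq0 by auto
  moreover have "y \<notin> N n" for n using ycyl[of "Suc n"] nxt[of "sq n" n] by (auto simp: sqS)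
  ultimately show False using sub by auto
qed

type_synonym cantor = "nat \<Rightarrow> bool"

definition UBP :: "(cantor \<times> cantor) set \<Rightarrow> bool" where
  "UBP H \<longleftrightarrow> (\<exists>(Q :: cantor \<Rightarrow> bool list \<Rightarrow> bool) (W :: cantor \<Rightarrow> nat \<Rightarrow> bool list \<Rightarrow> bool).
     (\<forall>u. {x. Q x u} \<in> sets borel) \<and> (\<forall>k u. {x. W x k u} \<in> sets borel) \<and>
     (\<forall>x k s. \<exists>u. W x k (s @ u)) \<and>
     (\<forall>x y. (\<forall>k. \<exists>n. W x k (pre y n)) \<longrightarrow> ((x, y) \<in> H \<longleftrightarrow> (\<exists>n. Q x (pre y n)))))"

lemma UBP_open:
  assumes "open G"
  shows "UBP G"
proof -
  define Q where "Q x u \<longleftrightarrow> (\<exists>w. x \<in> cyl w \<and> cyl w \<times> cyl u \<subseteq> G)" for x u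
  have eqQ: "{x. Q x u} = \<Union>{cyl w |w. cyl w \<times> cyl u \<subseteq> G}" for u
    unfolding Q_def by auto
  have "open {x. Q x u}" for u unfolding eqQ by (intro open_Union) auto
  then have 1: "\<forall>u. {x. Q x u} \<in> sets borel" by auto
  have 2: "(x, y) \<in> G \<longleftrightarrow> (\<exists>n. Q x (pre y n))" for x y
  proof
    assume "(x, y) \<in> G"
    then obtain A B where AB0: "open A" "open B" "(x, y) \<in> A \<times> B" "A \<times> B \<subseteq> G"
      using open_prod_elim[OF assms \<open>(x, y) \<in> G\<close>] by metis
    then have AB: "open A" "open B" "x \<in> A" "y \<in> B" "A \<times> B \<subseteq> G" by auto
    obtain n1 where "cyl (pre x n1) \<subseteq> A" using cyl_base[OF AB(1) AB(3)] by blast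
    moreover obtain n2 where "cyl (pre y n2) \<subseteq> B" using cyl_base[OF AB(2) AB(4)] by blast
    ultimately have "Q x (pre y n2)" unfolding Q_def using AB(5)
      by (intro exI[of _ "pre x n1"]) auto
    then show "\<exists>n. Q x (pre y n)" by blast
  next
    assume "\<exists>n. Q x (pre y n)"
    then show "(x, y) \<in> G" unfolding Q_def by auto
  qed
  show ?thesis unfolding UBP_def
    apply (rule exI[of _ Q], rule exI[of _ "\<lambda>x k u. True"], intro conjI allI impI)
    subgoal by (rule 1[rule_format])
    subgoal by simp
    subgoal by simp
    subgoal by (rule 2)
    done
qed

definition comp :: "bool list \<Rightarrow> bool list \<Rightarrow> bool" where
  "comp u v \<longleftrightarrow> (\<forall>i. i < length u \<longrightarrow> i < length v \<longrightarrow> u!i = v!i)"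

lemma comp_pre: "comp (pre y n) (pre y m)"
  by (simp add: comp_def)

lemma comp_extend:
  assumes "comp s v"
  shows "\<exists>u. \<exists>i\<le>length (s @ u). take i (s @ u) = v"
proof (cases "length v \<le> length s")
  case True
  then have "take (length v) s = v" using assms
    by (auto simp: comp_def intro!: nth_equalityI)
  then show ?thesis using True by (intro exI[of _ "[]"] exI[of _ "length v"]) auto
next
  case False
  then have "take (length s) v = s" using assms
    by (auto simp: comp_def intro!: nth_equalityI)
  then have "s @ drop (length s) v = v" by (metis append_take_drop_id)
  then show ?thesis by (intro exI[of _ "drop (length s) v"] exI[of _ "length v"]) auto
qed

lemma UBP_compl:
  assumes "UBP H"
  shows "UBP (UNIV - H)"
proof -
  obtain Q :: "cantor \<Rightarrow> bool list \<Rightarrow> bool" and W :: "cantor \<Rightarrow> nat \<Rightarrow> bool list \<Rightarrow> bool" where Q: "\<And>u. {x. Q x u} \<in> sets borel" and W: "\<And>k u. {x. W x k u} \<in> sets borel"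
    and dens: "\<And>x k s. \<exists>u. W x k (s @ u)"
    and cor: "\<And>x y. (\<forall>k. \<exists>n. W x k (pre y n)) \<Longrightarrow> ((x, y) \<in> H \<longleftrightarrow> (\<exists>n. Q x (pre y n)))"
    using assms unfolding UBP_def by blast
  define Q2 where "Q2 x u \<longleftrightarrow> (\<forall>v. comp u v \<longrightarrow> \<not> Q x v)" for x u
  define W' where "W' x k u = (case k of 0 \<Rightarrow> (\<exists>i\<le>length u. Q x (take i u)) \<or> Q2 x u
       | Suc j \<Rightarrow> W x j u)" for x k u
  have [measurable]: "Measurable.pred borel (\<lambda>x. Q x u)" for u
    using Q[of u] by (simp add: pred_def)
  have [measurable]: "Measurable.pred borel (\<lambda>x. W x k u)" for k u
    using W[of k u] by (simp add: pred_def)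
  have 1: "{x. Q2 x u} \<in> sets borel" for u
  proof -
    have "Measurable.pred borel (\<lambda>x. Q2 x u)" unfolding Q2_def by measurable
    then show ?thesis by (simp add: pred_def)
  qed
  have 2: "{x. W' x k u} \<in> sets borel" for k u
  proof -
    have [measurable]: "Measurable.pred borel (\<lambda>x. Q2 x u)" for u using 1[of u] by (simp add: pred_def)
    have "Measurable.pred borel (\<lambda>x. W' x k u)" unfolding W'_def by (cases k) (simp_all, measurable)
    then show ?thesis by (simp add: pred_def)
  qed
  have 3: "\<exists>u. W' x k (s @ u)" for x k s
  proof (cases k)
    case 0
    show ?thesis
    proof (cases "\<exists>v. Q x v \<and> comp s v")
      case True
      then obtain v u i where "Q x v" "i \<le> length (s @ u)" "take i (s @ u) = v"
        using comp_extend by blast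
      then show ?thesis unfolding W'_def 0 by auto
    next
      case False
      then have "Q2 x s" unfolding Q2_def by (auto simp: comp_def)
      then show ?thesis unfolding W'_def 0 by (intro exI[of _ "[]"]) auto
    qed
  next
    case (Suc j)
    then show ?thesis unfolding W'_def using dens by auto
  qed
  have 4: "(x, y) \<in> UNIV - H \<longleftrightarrow> (\<exists>n. Q2 x (pre y n))"
    if all: "\<forall>k. \<exists>n. W' x k (pre y n)" for x y
  proof -
    have "\<forall>k. \<exists>n. W x k (pre y n)"
    proof
      fix k obtain n where "W' x (Suc k) (pre y n)" using all by blast
      then show "\<exists>n. W x k (pre y n)" unfolding W'_def by auto
    qed
    then have eq: "(x, y) \<in> H \<longleftrightarrow> (\<exists>n. Q x (pre y n))" using cor by blast
    have excl: "\<not> (Q2 x (pre y n) \<and> Q x (pre y m))" for n m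
      unfolding Q2_def using comp_pre by blast
    obtain n where "W' x 0 (pre y n)" using all by blast
    then have "(\<exists>i\<le>n. Q x (pre y (min i n))) \<or> Q2 x (pre y n)"
      unfolding W'_def by (simp add: take_pre)
    then have "(\<exists>m. Q x (pre y m)) \<or> Q2 x (pre y n)" by blast
    then show ?thesis using eq excl by blast
  qed
  show ?thesis unfolding UBP_def
    apply (rule exI[of _ Q2], rule exI[of _ W'], intro conjI allI impI)
    subgoal by (rule 1)
    subgoal by (rule 2)
    subgoal by (rule 3)
    subgoal by (rule 4)
    done
qed

lemma UBP_Union:
  assumes "\<And>i::nat. UBP (A i)"
  shows "UBP (\<Union>i. A i)"
proof -
  have "\<forall>i. \<exists>(Q :: cantor \<Rightarrow> bool list \<Rightarrow> bool) (W :: cantor \<Rightarrow> nat \<Rightarrow> bool list \<Rightarrow> bool). (\<forall>u. {x. Q x u} \<in> sets borel) \<and> (\<forall>k u. {x. W x k u} \<in> sets borel) \<and>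
     (\<forall>x k s. \<exists>u. W x k (s @ u)) \<and>
     (\<forall>x y. (\<forall>k. \<exists>n. W x k (pre y n)) \<longrightarrow> ((x, y) \<in> A i \<longleftrightarrow> (\<exists>n. Q x (pre y n))))"
    using assms unfolding UBP_def by blast
  then obtain Q :: "nat \<Rightarrow> cantor \<Rightarrow> bool list \<Rightarrow> bool" and W :: "nat \<Rightarrow> cantor \<Rightarrow> nat \<Rightarrow> bool list \<Rightarrow> bool" where Q: "\<And>i u. {x. Q i x u} \<in> sets borel" and W: "\<And>i k u. {x. W i x k u} \<in> sets borel"
    and dens: "\<And>i x k s. \<exists>u. W i x k (s @ u)"
    and cor: "\<And>i x y. (\<forall>k. \<exists>n. W i x k (pre y n)) \<Longrightarrow> ((x, y) \<in> A i \<longleftrightarrow> (\<exists>n. Q i x (pre y n)))"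
    by metis
  define Q2 where "Q2 x u \<longleftrightarrow> (\<exists>i. Q i x u)" for x u
  define W' where "W' x k u \<longleftrightarrow> W (fst (prod_decode k)) x (snd (prod_decode k)) u" for x k u
  have [measurable]: "Measurable.pred borel (\<lambda>x. Q i x u)" for i u
    using Q[of i u] by (simp add: pred_def)
  have 1: "{x. Q2 x u} \<in> sets borel" for u
  proof -
    have "Measurable.pred borel (\<lambda>x. Q2 x u)" unfolding Q2_def by measurable
    then show ?thesis by (simp add: pred_def)
  qed
  have 2: "{x. W' x k u} \<in> sets borel" for k u unfolding W'_def using W by simp
  have 3: "\<exists>u. W' x k (s @ u)" for x k s unfolding W'_def using dens by simp
  have 4: "(x, y) \<in> (\<Union>i. A i) \<longleftrightarrow> (\<exists>n. Q2 x (pre y n))"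
    if all: "\<forall>k. \<exists>n. W' x k (pre y n)" for x y
  proof -
    have "\<forall>k. \<exists>n. W i x k (pre y n)" for i
    proof
      fix k obtain n where "W' x (prod_encode (i, k)) (pre y n)" using all by blast
      then show "\<exists>n. W i x k (pre y n)" unfolding W'_def by auto
    qed
    then show ?thesis using cor unfolding Q2_def by blast
  qed
  show ?thesis unfolding UBP_def
    apply (rule exI[of _ Q2], rule exI[of _ W'], intro conjI allI impI)
    subgoal by (rule 1)
    subgoal by (rule 2)
    subgoal by (rule 3)
    subgoal by (rule 4)
    done
qed

lemma UBP_borel:
  assumes "H \<in> sets (borel :: (cantor \<times> cantor) measure)"
  shows "UBP H"
proof -
  have "H \<in> sigma_sets UNIV {S. open S}" using assms by (simp add: sets_borel)
  then show ?thesis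
  proof (induction rule: sigma_sets.induct)
    case (Basic a) then show ?case by (simp add: UBP_open)
  next
    case Empty then show ?case by (simp add: UBP_open)
  next
    case (Compl a) then show ?case by (intro UBP_compl)
  next
    case (Union a) then show ?case by (intro UBP_Union)
  qed
qed

lemma meager_codes:
  assumes "H \<in> sets (borel :: (cantor \<times> cantor) measure)" "\<And>x. meager (section_at H x)"
  shows "\<exists>W :: cantor \<Rightarrow> nat \<Rightarrow> bool list \<Rightarrow> bool.
     (\<forall>k u. {x. W x k u} \<in> sets borel) \<and> (\<forall>x k s. \<exists>u. W x k (s @ u)) \<and>
     (\<forall>x y. (\<forall>k. \<exists>n. W x k (pre y n)) \<longrightarrow> (x, y) \<notin> H)"
proof -
  obtain Q :: "cantor \<Rightarrow> bool list \<Rightarrow> bool" and W :: "cantor \<Rightarrow> nat \<Rightarrow> bool list \<Rightarrow> bool"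
    where all4: "(\<forall>u. {x. Q x u} \<in> sets borel) \<and> (\<forall>k u. {x. W x k u} \<in> sets borel) \<and>
     (\<forall>x k s. \<exists>u. W x k (s @ u)) \<and>
     (\<forall>x y. (\<forall>k. \<exists>n. W x k (pre y n)) \<longrightarrow> ((x, y) \<in> H \<longleftrightarrow> (\<exists>n. Q x (pre y n))))"
    using UBP_borel[OF assms(1)] unfolding UBP_def by (elim exE) (rule that)
  have W: "\<And>k u. {x. W x k u} \<in> sets borel" using all4 by simp
  have dens: "\<And>x k s. \<exists>u. W x k (s @ u)" using all4 by simp
  have cor: "\<And>x y. (\<forall>k. \<exists>n. W x k (pre y n)) \<Longrightarrow> ((x, y) \<in> H \<longleftrightarrow> (\<exists>n. Q x (pre y n)))"
    using all4 by simp
  have noQ: "\<not> Q x v" for x v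
  proof
    assume Qv: "Q x v"
    define D where "D k = {y. \<exists>n. W x k (pre y n)}" for k
    have openD: "open (D k)" for k
    proof -
      have eqD: "D k = (\<Union>y\<in>D k. \<Union>n\<in>{n. W x k (pre y n)}. cyl (pre y n))"
      proof
        show "D k \<subseteq> (\<Union>y\<in>D k. \<Union>n\<in>{n. W x k (pre y n)}. cyl (pre y n))"
          unfolding D_def using pre_in_cyl by blast
        show "(\<Union>y\<in>D k. \<Union>n\<in>{n. W x k (pre y n)}. cyl (pre y n)) \<subseteq> D k"
        proof (clarify)
          fix z y n assume "W x k (pre y n)" "z \<in> cyl (pre y n)"
          then have "pre z n = pre y n" using pre_of_cyl by fastforce
          then show "z \<in> D k" unfolding D_def mem_Collect_eq
            by (intro exI[of _ n]) (use \<open>W x k (pre y n)\<close> in simp)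
        qed
      qed
      have "open (\<Union>y\<in>D k. \<Union>n\<in>{n. W x k (pre y n)}. cyl (pre y n))"
        by (intro open_UN ballI open_cyl)
      then show ?thesis using eqD by simp
    qed
    have ndD: "nowhere_dense (UNIV - D k)" for k
    proof -
      have cl: "closure (UNIV - D k) = UNIV - D k"
        using openD[of k] by (simp add: closed_def closure_closed Compl_eq_Diff_UNIV[symmetric])
      have "interior (UNIV - D k) = {}"
      proof (rule ccontr)
        assume "interior (UNIV - D k) \<noteq> {}"
        then obtain z where z: "z \<in> interior (UNIV - D k)" by auto
        then obtain m where m: "cyl (pre z m) \<subseteq> interior (UNIV - D k)"
          using cyl_base[of "interior (UNIV - D k)" z] by auto
        obtain u where u: "W x k (pre z m @ u)" using dens by blast
        have "ext (pre z m @ u) \<in> D k" unfolding D_def mem_Collect_eq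
          by (intro exI[of _ "length (pre z m @ u)"]) (simp only: pre_ext u)
        moreover have "ext (pre z m @ u) \<in> cyl (pre z m)"
          using cyl_append[of "pre z m" u] ext_in_cyl[of "pre z m @ u"] by blast
        then have "ext (pre z m @ u) \<in> UNIV - D k" using m interior_subset[of "UNIV - D k"] by blast
        ultimately show False by blast
      qed
      then show ?thesis unfolding nowhere_dense_def cl .
    qed
    obtain N :: "nat \<Rightarrow> cantor set" where N: "\<And>n. nowhere_dense (N n)" "section_at H x \<subseteq> (\<Union>n. N n)"
      using assms(2)[of x] unfolding meager_def by blast
    define NN where "NN j = (if even j then N (j div 2) else UNIV - D (j div 2))" for j
    have "nowhere_dense (NN j)" for j
      by (cases "even j") (simp_all only: NN_def if_True if_False N(1) ndD)
    moreover have "cyl v \<subseteq> (\<Union>j. NN j)"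
    proof
      fix y assume y: "y \<in> cyl v"
      show "y \<in> (\<Union>j. NN j)"
      proof (cases "\<forall>k. y \<in> D k")
        case True
        then have "\<forall>k. \<exists>n. W x k (pre y n)" unfolding D_def by blast
        moreover have "Q x (pre y (length v))" using pre_of_cyl[OF y] Qv by simp
        ultimately have "(x, y) \<in> H" using cor by blast
        then have "y \<in> section_at H x" unfolding section_at_def by simp
        then obtain n where "y \<in> N n" using N(2) by blast
        then have "y \<in> NN (2 * n)" unfolding NN_def by simp
        then show ?thesis by blast
      next
        case False
        then obtain k where "y \<notin> D k" by blast
        then have "y \<in> NN (2 * k + 1)" unfolding NN_def by simp
        then show ?thesis by blast
      qed
    qed
    ultimately show False using baire[of "cyl v" NN] cyl_nonempty by auto
  qed
  show ?thesis
    apply (rule exI[of _ W], intro conjI allI impI)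
    subgoal using W by simp
    subgoal using dens by simp
    subgoal for x y using cor[of x y] noQ by simp
    done
qed

lemma meas_nat_to_borel:
  fixes f :: "'a \<Rightarrow> nat"
  shows "f \<in> M \<rightarrow>\<^sub>M count_space UNIV \<Longrightarrow> f \<in> borel_measurable M"
  using measurable_cong_sets[OF refl sets_borel_eq_count_space] by blast

lemma meas_borel_to_nat:
  fixes f :: "'a \<Rightarrow> nat"
  shows "f \<in> borel_measurable M \<Longrightarrow> f \<in> M \<rightarrow>\<^sub>M count_space UNIV"
  using measurable_cong_sets[OF refl sets_borel_eq_count_space] by blast

lemma fun_meas:
  fixes f :: "'a \<Rightarrow> nat \<Rightarrow> nat"
  assumes "\<And>n. (\<lambda>x. f x n) \<in> M \<rightarrow>\<^sub>M count_space UNIV"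
  shows "f \<in> borel_measurable M"
  by (rule measurable_coordinatewise_then_product) (use assms meas_nat_to_borel in blast)

lemma coord_meas:
  fixes f :: "'a \<Rightarrow> nat \<Rightarrow> nat"
  assumes "f \<in> borel_measurable M"
  shows "(\<lambda>x. f x n) \<in> M \<rightarrow>\<^sub>M count_space UNIV"
proof -
  have "(\<lambda>x. (\<lambda>g. g n) (f x)) \<in> borel_measurable M"
    by (rule borel_measurable_continuous_on[OF _ assms]) (simp add: continuous_on_product_coordinates)
  then show ?thesis by (rule meas_borel_to_nat)
qed

lemma meas2:
  fixes f :: "'a \<Rightarrow> 'b::countable" and g :: "'a \<Rightarrow> 'c::countable"
  assumes "f \<in> M \<rightarrow>\<^sub>M count_space UNIV" "g \<in> M \<rightarrow>\<^sub>M count_space UNIV"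
  shows "(\<lambda>x. h (f x) (g x)) \<in> M \<rightarrow>\<^sub>M count_space UNIV"
proof -
  have "(\<lambda>x. (f x, g x)) \<in> M \<rightarrow>\<^sub>M count_space UNIV \<Otimes>\<^sub>M count_space UNIV"
    using assms by (rule measurable_Pair)
  then have "(\<lambda>x. (f x, g x)) \<in> M \<rightarrow>\<^sub>M count_space (UNIV \<times> UNIV)"
    by (simp add: pair_measure_countable)
  moreover have "(\<lambda>(a, b). h a b) \<in> count_space (UNIV \<times> UNIV) \<rightarrow>\<^sub>M count_space UNIV" by simp
  ultimately have "(\<lambda>z. (\<lambda>(a, b). h a b) z) \<circ> (\<lambda>x. (f x, g x)) \<in> M \<rightarrow>\<^sub>M count_space UNIV"
    using measurable_comp by blast
  moreover have "(\<lambda>z. (\<lambda>(a, b). h a b) z) \<circ> (\<lambda>x. (f x, g x)) = (\<lambda>x. h (f x) (g x))"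
    by (auto simp: fun_eq_iff)
  ultimately show ?thesis by simp
qed

lemma meas_list:
  fixes \<phi> :: "'i \<Rightarrow> 'a \<Rightarrow> 'b::countable"
  assumes "\<And>r. \<phi> r \<in> M \<rightarrow>\<^sub>M count_space UNIV"
  shows "(\<lambda>x. map (\<lambda>r. \<phi> r x) xs) \<in> M \<rightarrow>\<^sub>M count_space UNIV"
proof (induction xs)
  case Nil then show ?case by simp
next
  case (Cons a xs)
  show ?case using meas2[OF assms[of a] Cons.IH, of "(#)"] by simp
qed

lemma meas_pred_nat:
  fixes f :: "'a \<Rightarrow> nat"
  assumes "f \<in> M \<rightarrow>\<^sub>M count_space UNIV"
  shows "{x \<in> space M. P (f x)} \<in> sets M"
proof -
  have "{x \<in> space M. P (f x)} = f -` {n. P n} \<inter> space M" by auto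
  then show ?thesis using measurable_sets[OF assms, of "{n. P n}"] by simp
qed

lemma pred_nat:
  fixes f :: "'a \<Rightarrow> nat"
  assumes "f \<in> M \<rightarrow>\<^sub>M count_space UNIV"
  shows "Measurable.pred M (\<lambda>x. P (f x))"
  using meas_pred_nat[OF assms] by (simp add: pred_def)

lemma key_lemma:
  fixes X :: "cantor set" and f :: "cantor \<Rightarrow> nat \<Rightarrow> nat" and A :: "cantor \<Rightarrow> nat set"
  assumes P2: "\<forall>f::cantor \<Rightarrow> nat \<Rightarrow> nat. f \<in> borel_measurable borel \<longrightarrow> (\<exists>g. \<forall>x\<in>X. infinite {n. f x n = g n})"
    and fm: "\<And>n. (\<lambda>x. f x n) \<in> borel \<rightarrow>\<^sub>M count_space UNIV"
    and Am: "\<And>n. {x. n \<in> A x} \<in> sets borel"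
    and Ainf: "\<And>x. x \<in> X \<Longrightarrow> infinite (A x)"
  shows "\<exists>g. \<forall>x\<in>X. infinite {n. n \<in> A x \<and> f x n = g n}"
proof -
  define e where "e x = rec_nat (LEAST n. n \<in> A x) (\<lambda>r m. LEAST n. n \<in> A x \<and> m < n)" for x
  have e0: "e x 0 = (LEAST n. n \<in> A x)" and eS: "e x (Suc r) = (LEAST n. n \<in> A x \<and> e x r < n)" for x r
    by (simp_all add: e_def)
  have [measurable]: "Measurable.pred borel (\<lambda>x. n \<in> A x)" for n using Am[of n] by (simp add: pred_def)
  have em: "(\<lambda>x. e x r) \<in> borel \<rightarrow>\<^sub>M count_space UNIV" for r
  proof (induction r)
    case 0 show ?case unfolding e0 by (rule measurable_Least) measurable
  next
    case (Suc r)
    have "(\<lambda>x. (\<lambda>m x. LEAST n. n \<in> A x \<and> m < n) (e x r) x) \<in> borel \<rightarrow>\<^sub>M count_space UNIV"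
      by (rule measurable_compose_countable[OF _ Suc.IH]) (rule measurable_Least, measurable)
    then show ?case unfolding eS by simp
  qed
  have eprops: "e x r \<in> A x \<and> e x r < e x (Suc r)" if x: "x \<in> X" for x r
  proof -
    have unb: "\<forall>m. \<exists>n>m. n \<in> A x" using Ainf[OF x] by (simp add: infinite_nat_iff_unbounded)
    have inA: "e x r \<in> A x" for r
    proof (cases r)
      case 0
      have "\<exists>n. n \<in> A x" using unb by blast
      then show ?thesis unfolding 0 e0 by (rule LeastI_ex)
    next
      case (Suc r')
      have "\<exists>n. n \<in> A x \<and> e x r' < n" using unb by blast
      then show ?thesis unfolding Suc eS using LeastI_ex[of "\<lambda>n. n \<in> A x \<and> e x r' < n"] by blast
    qed
    have "\<exists>n. n \<in> A x \<and> e x r < n" using unb by blast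
    then have "e x r < e x (Suc r)" unfolding eS using LeastI_ex[of "\<lambda>n. n \<in> A x \<and> e x r < n"] by blast
    then show ?thesis using inA by blast
  qed
  have smono: "strict_mono (e x)" if "x \<in> X" for x
    using eprops[OF that] by (simp add: strict_mono_Suc_iff)
  define F where "F x i = to_nat (map (\<lambda>r. (e x r, f x (e x r))) [i*i..<Suc i * Suc i])" for x i
  have Fm: "(\<lambda>x. F x i) \<in> borel \<rightarrow>\<^sub>M count_space UNIV" for i
  proof -
    have fe: "(\<lambda>x. f x (e x r)) \<in> borel \<rightarrow>\<^sub>M count_space UNIV" for r
      by (rule measurable_compose_countable[OF fm em])
    have pr: "(\<lambda>x. (e x r, f x (e x r))) \<in> borel \<rightarrow>\<^sub>M count_space UNIV" for r
      using meas2[OF em fe, of Pair] by simp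
    have Lm: "(\<lambda>x. map (\<lambda>r. (e x r, f x (e x r))) [i*i..<Suc i * Suc i]) \<in> borel \<rightarrow>\<^sub>M count_space UNIV"
      by (rule meas_list[of "\<lambda>r x. (e x r, f x (e x r))", OF pr])
    show ?thesis unfolding F_def by (rule meas2[OF Lm Lm, of "\<lambda>a b. to_nat a"])
  qed
  have "F \<in> borel_measurable borel" by (rule fun_meas[OF Fm])
  from P2[rule_format, OF this] obtain G where G: "\<forall>x\<in>X. infinite {i. F x i = G i}" by blast
  define L where "L i = (from_nat (G i) :: (nat \<times> nat) list)" for i
  define cs where "cs = rec_nat [] (\<lambda>i c. c @ (if \<exists>m. m \<in> fst ` set (L i) \<and> m \<notin> set c
       then [LEAST m. m \<in> fst ` set (L i) \<and> m \<notin> set c] else []))"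
  define lg where "lg i \<longleftrightarrow> (\<exists>m. m \<in> fst ` set (L i) \<and> m \<notin> set (cs i))" for i
  define ch where "ch i = (LEAST m. m \<in> fst ` set (L i) \<and> m \<notin> set (cs i))" for i
  have cs0: "cs 0 = []" and csS: "cs (Suc i) = cs i @ (if lg i then [ch i] else [])" for i
    by (simp_all add: cs_def lg_def ch_def)
  have lenc: "length (cs i) \<le> i" for i by (induction i) (auto simp: csS cs0)
  have csmono: "set (cs i) \<subseteq> set (cs j)" if "i \<le> j" for i j
    using that
  proof (induction j rule: dec_induct)
    case (step n) then show ?case by (auto simp: csS)
  qed simp
  have chp: "ch i \<in> fst ` set (L i) \<and> ch i \<notin> set (cs i) \<and> ch i \<in> set (cs (Suc i))" if "lg i" for i
  proof -
    have "ch i \<in> fst ` set (L i) \<and> ch i \<notin> set (cs i)"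
      using that unfolding lg_def ch_def by (rule LeastI_ex)
    then show ?thesis using that by (simp add: csS)
  qed
  have chinj: "i = j" if "lg i" "lg j" "ch i = ch j" for i j
  proof (rule ccontr)
    assume "i \<noteq> j"
    then consider "i < j" | "j < i" by linarith
    then show False
    proof cases
      case 1
      then have "ch i \<in> set (cs j)" using chp[OF that(1)] csmono[of "Suc i" j] by auto
      then show False using chp[OF that(2)] that(3) by simp
    next
      case 2
      then have "ch j \<in> set (cs i)" using chp[OF that(2)] csmono[of "Suc j" i] by auto
      then show False using chp[OF that(1)] that(3) by simp
    qed
  qed
  define g where "g m = (case map_of (L (LEAST i. lg i \<and> ch i = m)) m of None \<Rightarrow> 0 | Some v \<Rightarrow> v)" for m
  have gch: "g (ch i) = (case map_of (L i) (ch i) of None \<Rightarrow> 0 | Some v \<Rightarrow> v)" if "lg i" for i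
  proof -
    have "(LEAST i'. lg i' \<and> ch i' = ch i) = i"
      by (rule Least_equality) (use that chinj in auto)
    then show ?thesis unfolding g_def by simp
  qed
  have "infinite {n. n \<in> A x \<and> f x n = g n}" if x: "x \<in> X" for x
  proof -
    define Ag where "Ag = {i. F x i = G i}"
    have infAg: "infinite Ag" using G x by (simp add: Ag_def)
    have good: "lg i \<and> ch i \<in> A x \<and> f x (ch i) = g (ch i)" if i: "i \<in> Ag" for i
    proof -
      have Li: "L i = map (\<lambda>r. (e x r, f x (e x r))) [i*i..<Suc i * Suc i]"
      proof -
        have "F x i = G i" using i by (simp add: Ag_def)
        then have "L i = from_nat (F x i)" by (simp add: L_def)
        then show ?thesis by (simp add: F_def)
      qed
      have fstL: "fst ` set (L i) = e x ` {i*i..<Suc i * Suc i}"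
        unfolding Li by (simp only: set_map image_image set_upt fst_conv)
      have "inj_on (e x) {i*i..<Suc i * Suc i}"
        using smono[OF x] strict_mono_imp_inj_on by blast
      then have "card (fst ` set (L i)) = Suc i * Suc i - i * i"
        unfolding fstL by (simp add: card_image)
      then have cardL: "card (fst ` set (L i)) > i" by simp
      have lgi: "lg i"
      proof (rule ccontr)
        assume "\<not> lg i"
        then have "fst ` set (L i) \<subseteq> set (cs i)" unfolding lg_def by blast
        then have "card (fst ` set (L i)) \<le> card (set (cs i))" by (simp add: card_mono)
        also have "\<dots> \<le> length (cs i)" by (rule card_length)
        also have "\<dots> \<le> i" by (rule lenc)
        finally show False using cardL by simp
      qed
      have chL: "ch i \<in> fst ` set (L i)" using chp[OF lgi] by blast
      then have "ch i \<in> A x" using fstL eprops[OF x] by auto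
      moreover obtain v where v: "map_of (L i) (ch i) = Some v"
        using chL by (metis map_of_eq_None_iff not_None_eq)
      then have "(ch i, v) \<in> set (L i)" by (rule map_of_SomeD)
      then have "v = f x (ch i)" unfolding Li by auto
      then have "g (ch i) = f x (ch i)" using gch[OF lgi] v by simp
      ultimately show ?thesis using lgi by simp
    qed
    have "inj_on ch Ag" using good chinj by (meson inj_onI)
    then have "infinite (ch ` Ag)" using infAg finite_image_iff by blast
    moreover have "ch ` Ag \<subseteq> {n. n \<in> A x \<and> f x n = g n}" using good by auto
    ultimately show ?thesis using infinite_super by blast
  qed
  then show ?thesis by blast
qed

lemma two_imp_R:
  fixes X :: "cantor set"
  assumes P2: "\<forall>f::cantor \<Rightarrow> nat \<Rightarrow> nat. f \<in> borel_measurable borel \<longrightarrow> (\<exists>g. \<forall>x\<in>X. infinite {n. f x n = g n})"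
  shows "R_set X"
  unfolding R_set_def
proof (intro ballI impI)
  fix H :: "(cantor \<times> cantor) set"
  assume Hb: "H \<in> sets borel" and Hm: "\<forall>x. meager (section_at H x)"
  obtain W :: "cantor \<Rightarrow> nat \<Rightarrow> bool list \<Rightarrow> bool" where
    all3: "(\<forall>k u. {x. W x k u} \<in> sets borel) \<and> (\<forall>x k s. \<exists>u. W x k (s @ u)) \<and>
     (\<forall>x y. (\<forall>k. \<exists>n. W x k (pre y n)) \<longrightarrow> (x, y) \<notin> H)"
    using meager_codes[OF Hb Hm[rule_format]] by (elim exE) (rule that)
  have Wb: "\<And>k u. {x. W x k u} \<in> sets borel" using all3 by simp
  have dens: "\<And>x k s. \<exists>u. W x k (s @ u)" using all3 by simp
  have cor: "\<And>x y. (\<forall>k. \<exists>n. W x k (pre y n)) \<Longrightarrow> (x, y) \<notin> H" using all3 by simp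
  have [measurable]: "Measurable.pred borel (\<lambda>x. W x k u)" for k u
    using Wb[of k u] by (simp add: pred_def)
  define Wd where "Wd x k u \<longleftrightarrow> (\<forall>j\<le>k. \<exists>i\<le>length u. W x j (take i u))" for x k u
  have Wd_up: "Wd x k (u @ r)" if "Wd x k u" for x k u r
  proof -
    have "\<exists>i\<le>length (u @ r). W x j (take i (u @ r))" if "j \<le> k" for j
    proof -
      obtain i where "i \<le> length u" "W x j (take i u)" using \<open>Wd x k u\<close> \<open>j \<le> k\<close> unfolding Wd_def by blast
      then show ?thesis by (intro exI[of _ i]) simp
    qed
    then show ?thesis unfolding Wd_def by blast
  qed
  have Wd_mono: "Wd x j u" if "Wd x k u" "j \<le> k" for x j k u
    using that unfolding Wd_def by simp
  have Wd_dens: "\<exists>u. Wd x k (s @ u)" for x k s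
  proof (induction k)
    case 0
    obtain u where "W x 0 (s @ u)" using dens by blast
    then have "Wd x 0 (s @ u)" unfolding Wd_def by (intro allI impI exI[of _ "length (s @ u)"]) simp
    then show ?case by blast
  next
    case (Suc k)
    then obtain u1 where u1: "Wd x k (s @ u1)" by blast
    obtain u2 where u2: "W x (Suc k) ((s @ u1) @ u2)" using dens by blast
    have "Wd x (Suc k) (s @ u1 @ u2)" unfolding Wd_def
    proof (intro allI impI)
      fix j assume "j \<le> Suc k"
      then consider "j \<le> k" | "j = Suc k" by linarith
      then show "\<exists>i\<le>length (s @ u1 @ u2). W x j (take i (s @ u1 @ u2))"
      proof cases
        case 1 then show ?thesis using Wd_up[OF u1, of u2] unfolding Wd_def by simp
      next
        case 2 then show ?thesis using u2 by (intro exI[of _ "length (s @ u1 @ u2)"]) simp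
      qed
    qed
    then show ?case by blast
  qed
  define Frc where "Frc x l s \<longleftrightarrow> (\<forall>t::bool list. length t = l \<longrightarrow> Wd x l (t @ s))" for x l s
  have fin_ex: "\<exists>s. \<forall>t\<in>T. Wd x k (t @ s)" if "finite T" for x k and T :: "bool list set"
    using that
  proof (induction T rule: finite_induct)
    case empty then show ?case by simp
  next
    case (insert t0 T)
    then obtain s where s: "\<forall>t\<in>T. Wd x k (t @ s)" by blast
    obtain u where u: "Wd x k ((t0 @ s) @ u)" using Wd_dens by blast
    have "\<forall>t\<in>insert t0 T. Wd x k (t @ s @ u)"
      using s u Wd_up by (metis append.assoc insert_iff)
    then show ?case by blast
  qed
  have Frc_ex: "\<exists>s. Frc x l s" for x l
  proof -
    have "finite {t::bool list. set t \<subseteq> UNIV \<and> length t = l}"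
      by (rule finite_lists_length_eq) simp
    then have "finite {t::bool list. length t = l}" by simp
    from fin_ex[OF this] show ?thesis unfolding Frc_def by blast
  qed
  have Frc_up: "Frc x l (s @ r)" if "Frc x l s" for x l s r
    using that Wd_up unfolding Frc_def by (metis append.assoc)
  define N where "N x l = (LEAST L. \<exists>s. length s = L \<and> Frc x l s)" for x l
  have N_ex: "\<exists>s. length s = N x l \<and> Frc x l s" for x l
  proof -
    obtain s where "Frc x l s" using Frc_ex by blast
    then have "\<exists>L s. length s = L \<and> Frc x l s" by blast
    then show ?thesis unfolding N_def by (rule LeastI_ex)
  qed
  have N_ge: "\<exists>s. length s = L \<and> Frc x l s" if "N x l \<le> L" for x l L
  proof -
    obtain s where s: "length s = N x l" "Frc x l s" using N_ex by blast
    then show ?thesis using that by (intro exI[of _ "s @ replicate (L - N x l) False"] conjI Frc_up) auto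
  qed
  have [measurable]: "Measurable.pred borel (\<lambda>x. Frc x l s)" for l s
    unfolding Frc_def Wd_def by measurable
  have Nm: "(\<lambda>x. N x l) \<in> borel \<rightarrow>\<^sub>M count_space UNIV" for l
    unfolding N_def by (rule measurable_Least) measurable
  define M where "M x = rec_nat (N x 0) (\<lambda>n a. max a (Suc n + N x (Suc n)))" for x
  have M0: "M x 0 = N x 0" and MS: "M x (Suc n) = max (M x n) (Suc n + N x (Suc n))" for x n
    by (simp_all add: M_def)
  have Mm: "(\<lambda>x. M x n) \<in> borel \<rightarrow>\<^sub>M count_space UNIV" for n
  proof (induction n)
    case 0 then show ?case unfolding M0 by (rule Nm)
  next
    case (Suc n)
    have "(\<lambda>x. Suc n + N x (Suc n)) \<in> borel \<rightarrow>\<^sub>M count_space UNIV"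
      using meas2[OF Nm Nm, of "\<lambda>a b. Suc n + a"] by simp
    from meas2[OF Suc.IH this, of max] show ?case unfolding MS .
  qed
  have M_ge: "n + N x n \<le> M x n" for x n by (cases n) (simp_all add: M0 MS)
  have M_mono: "M x m \<le> M x n" if "m \<le> n" for x m n
    by (rule lift_Suc_mono_le[of "M x", OF _ that]) (simp add: MS)
  define f1 where "f1 x n = M x (M x n)" for x n
  have f1m: "(\<lambda>x. f1 x n) \<in> borel \<rightarrow>\<^sub>M count_space UNIV" for n
    unfolding f1_def by (rule measurable_compose_countable[OF Mm Mm])
  have "f1 \<in> borel_measurable borel" by (rule fun_meas[OF f1m])
  from P2[rule_format, OF this] obtain h where h: "\<forall>x\<in>X. infinite {n. f1 x n = h n}" by blast
  define p where "p = rec_nat 0 (\<lambda>i a. a + 1 + Max (h ` {..a}))"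
  have p0: "p 0 = 0" and pS: "p (Suc i) = p i + 1 + Max (h ` {..p i})" for i
    by (simp_all add: p_def)
  have p_less: "p i < p (Suc i)" for i by (simp add: pS)
  have p_h: "h m \<le> p (Suc i)" if "m \<le> p i" for m i
  proof -
    have "h m \<le> Max (h ` {..p i})" using that by (intro Max_ge) auto
    then show ?thesis by (simp add: pS)
  qed
  have smp: "strict_mono p" using p_less by (simp add: strict_mono_Suc_iff)
  have p_ge: "i \<le> p i" for i using strict_mono_imp_increasing[OF smp] .
  have p_mono: "p i \<le> p j" if "i \<le> j" for i j using smp that by (simp add: strict_mono_less_eq)
  define blk where "blk m = (LEAST i. m < p (Suc i))" for m
  have blk_eq: "blk m = i" if "p i \<le> m" "m < p (Suc i)" for m i
    unfolding blk_def
  proof (rule Least_equality)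
    show "m < p (Suc i)" by fact
    fix i' assume "m < p (Suc i')"
    show "i \<le> i'"
    proof (rule ccontr)
      assume "\<not> i \<le> i'"
      then have "p (Suc i') \<le> p i" using p_mono by simp
      then show False using that \<open>m < p (Suc i')\<close> by simp
    qed
  qed
  have blk_ex: "\<exists>i. p i \<le> m \<and> m < p (Suc i)" for m
  proof -
    have ex: "\<exists>i. m < p (Suc i)" using p_ge[of "Suc m"] by (intro exI[of _ m]) simp
    define i where "i = blk m"
    have "m < p (Suc i)" unfolding i_def blk_def using ex by (rule LeastI_ex)
    moreover have "p i \<le> m"
    proof (cases i)
      case 0 then show ?thesis by (simp add: p0)
    next
      case (Suc j)
      then have "\<not> m < p (Suc j)" using not_less_Least[of j "\<lambda>i. m < p (Suc i)"] unfolding i_def blk_def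
        by simp
      then show ?thesis using Suc by simp
    qed
    ultimately show ?thesis by blast
  qed
  define A where "A x = {i. p i + N x (p i) \<le> p (Suc i)}" for x
  have Am: "{x. i \<in> A x} \<in> sets borel" for i
    using meas_pred_nat[OF Nm[of "p i"], of "\<lambda>v. p i + v \<le> p (Suc i)"] by (simp add: A_def)
  have Ainf: "infinite (A x)" if x: "x \<in> X" for x
    unfolding infinite_nat_iff_unbounded_le
  proof
    fix i0
    obtain n where n: "n \<ge> p i0" "f1 x n = h n"
      using h x unfolding infinite_nat_iff_unbounded_le by blast
    obtain i where i: "p i \<le> n" "n < p (Suc i)" using blk_ex by blast
    have "i0 \<le> i"
    proof (rule ccontr)
      assume "\<not> i0 \<le> i"
      then have "p (Suc i) \<le> p i0" using p_mono by simp
      then show False using i n by simp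
    qed
    have hn: "M x (M x n) \<le> p (Suc (Suc i))" using p_h[of n "Suc i"] i n(2) unfolding f1_def by simp
    show "\<exists>j\<ge>i0. j \<in> A x"
    proof (cases "M x (p i) \<le> p (Suc i)")
      case True
      then have "i \<in> A x" using M_ge[of "p i" x] unfolding A_def by simp
      then show ?thesis using \<open>i0 \<le> i\<close> by blast
    next
      case False
      then have "p (Suc i) \<le> M x n" using M_mono[OF i(1), of x] by simp
      then have "M x (p (Suc i)) \<le> M x (M x n)" by (rule M_mono)
      then have "Suc i \<in> A x" using M_ge[of "p (Suc i)" x] hn unfolding A_def by simp
      then show ?thesis using \<open>i0 \<le> i\<close> by (intro exI[of _ "Suc i"]) simp
    qed
  qed
  define c where "c x i = (LEAST c. length (from_nat c :: bool list) = p (Suc i) - p i \<and> Frc x (p i) (from_nat c))" for x i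
  have cm: "(\<lambda>x. c x i) \<in> borel \<rightarrow>\<^sub>M count_space UNIV" for i
    unfolding c_def by (rule measurable_Least) measurable
  have c_prop: "length (from_nat (c x i) :: bool list) = p (Suc i) - p i \<and> Frc x (p i) (from_nat (c x i))"
    if iA: "i \<in> A x" for x i
  proof -
    have "N x (p i) \<le> p (Suc i) - p i" using iA unfolding A_def by simp
    then obtain s :: "bool list" where s: "length s = p (Suc i) - p i" "Frc x (p i) s"
      using N_ge[of x "p i" "p (Suc i) - p i"] by blast
    then have "\<exists>c. length (from_nat c :: bool list) = p (Suc i) - p i \<and> Frc x (p i) (from_nat c)"
      by (intro exI[of _ "to_nat s"]) simp
    then show ?thesis unfolding c_def by (rule LeastI_ex)
  qed
  obtain g where g: "\<forall>x\<in>X. infinite {i. i \<in> A x \<and> c x i = g i}"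
    using key_lemma[of X c A, OF P2 cm Am Ainf] by blast
  define y where "y m = (from_nat (g (blk m)) :: bool list) ! (m - p (blk m))" for m
  have "y \<notin> section_at H x" if x: "x \<in> X" for x
  proof -
    have step: "Wd x (p i) (pre y (p (Suc i)))" if i: "i \<in> A x" "c x i = g i" for i
    proof -
      define s where "s = (from_nat (g i) :: bool list)"
      have s: "length s = p (Suc i) - p i" "Frc x (p i) s" using c_prop[OF i(1)] i(2) unfolding s_def by auto
      have eqd: "p (Suc i) = p i + (p (Suc i) - p i)" using p_less[of i] by simp
      have "map (\<lambda>j. y (p i + j)) [0..<p (Suc i) - p i] = s"
      proof (rule nth_equalityI)
        show "length (map (\<lambda>j. y (p i + j)) [0..<p (Suc i) - p i]) = length s" using s by simp
        fix j assume "j < length (map (\<lambda>j. y (p i + j)) [0..<p (Suc i) - p i])"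
        then have j: "j < p (Suc i) - p i" by simp
        then have "blk (p i + j) = i" by (intro blk_eq) auto
        then show "map (\<lambda>j. y (p i + j)) [0..<p (Suc i) - p i] ! j = s ! j"
          using j unfolding y_def s_def by simp
      qed
      then have "pre y (p (Suc i)) = pre y (p i) @ s" using pre_add[of y "p i" "p (Suc i) - p i"] eqd by simp
      moreover have "Wd x (p i) (pre y (p i) @ s)" using s(2) unfolding Frc_def by simp
      ultimately show ?thesis by simp
    qed
    have "\<exists>n. W x k (pre y n)" for k
    proof -
      obtain i where i: "i \<ge> k" "i \<in> A x" "c x i = g i"
        using g x unfolding infinite_nat_iff_unbounded_le by blast
      have "Wd x k (pre y (p (Suc i)))" using step[OF i(2,3)] Wd_mono p_ge[of i] i(1) by simp
      then obtain i' where "W x k (take i' (pre y (p (Suc i))))" unfolding Wd_def by blast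
      then show ?thesis by (auto simp: take_pre)
    qed
    then have "(x, y) \<notin> H" using cor by blast
    then show ?thesis by (simp add: section_at_def)
  qed
  then show "(\<Union>x\<in>X. section_at H x) \<noteq> UNIV" by blast
qed

lemma open_coord_pred: "{y::cantor. y j} \<in> sets borel"
proof -
  have "open {y::cantor. y j \<in> {True}}" by (rule open_coord) (simp add: open_discrete)
  then show ?thesis by simp
qed

lemma R_imp_two:
  fixes X :: "cantor set" and f :: "cantor \<Rightarrow> nat \<Rightarrow> nat"
  assumes R: "R_set X" and fb: "f \<in> borel_measurable borel"
  shows "\<exists>g. \<forall>x\<in>X. infinite {n. f x n = g n}"
proof -
  define \<psi> where "\<psi> y n = (if \<exists>k. y (prod_encode (n, k)) then LEAST k. y (prod_encode (n, k)) else 0)"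
    for y :: cantor and n
  have [measurable]: "Measurable.pred borel (\<lambda>y::cantor. y j)" for j
    using open_coord_pred[of j] by (simp add: pred_def)
  have \<psi>m: "(\<lambda>y. \<psi> y n) \<in> borel \<rightarrow>\<^sub>M count_space UNIV" for n
    unfolding \<psi>_def by measurable
  have fstm: "fst \<in> (borel :: (cantor \<times> cantor) measure) \<rightarrow>\<^sub>M borel"
    by (rule borel_measurable_continuous_onI) (intro continuous_intros)
  have sndm: "snd \<in> (borel :: (cantor \<times> cantor) measure) \<rightarrow>\<^sub>M borel"
    by (rule borel_measurable_continuous_onI) (intro continuous_intros)
  have am: "(\<lambda>z. f (fst z) n) \<in> (borel :: (cantor \<times> cantor) measure) \<rightarrow>\<^sub>M count_space UNIV" for n
  proof -
    have eq: "(\<lambda>x. f x n) \<circ> fst = (\<lambda>z. f (fst z) n)" by (rule ext) simp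
    show ?thesis using measurable_comp[OF fstm coord_meas[OF fb, of n]] unfolding eq .
  qed
  have bm: "(\<lambda>z. \<psi> (snd z) n) \<in> (borel :: (cantor \<times> cantor) measure) \<rightarrow>\<^sub>M count_space UNIV" for n
  proof -
    have eq: "(\<lambda>y. \<psi> y n) \<circ> snd = (\<lambda>z. \<psi> (snd z) n)" by (rule ext) simp
    show ?thesis using measurable_comp[OF sndm \<psi>m[of n]] unfolding eq .
  qed
  have [measurable]: "Measurable.pred (borel :: (cantor \<times> cantor) measure) (\<lambda>z. f (fst z) n = \<psi> (snd z) n)" for n
    using meas2[OF am bm, of "(=)"] by simp
  define H where "H = {z :: cantor \<times> cantor. \<exists>m. \<forall>n\<ge>m. f (fst z) n \<noteq> \<psi> (snd z) n}"
  have Hb: "H \<in> sets borel"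
  proof -
    have "Measurable.pred (borel :: (cantor \<times> cantor) measure) (\<lambda>z. \<exists>m. \<forall>n\<ge>m. f (fst z) n \<noteq> \<psi> (snd z) n)"
      by measurable
    then show ?thesis unfolding H_def by (simp add: pred_def)
  qed
  have Hm: "meager (section_at H x)" for x
  proof -
    define h where "h = f x"
    define E where "E m = {y::cantor. \<forall>n\<ge>m. \<not> (y (prod_encode (n, h n)) \<and> (\<forall>k<h n. \<not> y (prod_encode (n, k))))}" for m
    have sub: "section_at H x \<subseteq> (\<Union>m. E m)"
    proof
      fix y assume "y \<in> section_at H x"
      then obtain m where m: "\<forall>n\<ge>m. h n \<noteq> \<psi> y n" unfolding section_at_def H_def h_def by auto
      have "y \<in> E m" unfolding E_def mem_Collect_eq
      proof (intro allI impI notI)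
        fix n assume "m \<le> n" and c: "y (prod_encode (n, h n)) \<and> (\<forall>k<h n. \<not> y (prod_encode (n, k)))"
        then have "(LEAST k. y (prod_encode (n, k))) = h n"
          by (intro Least_equality) (auto simp: not_less[symmetric])
        then have "\<psi> y n = h n" unfolding \<psi>_def using c by auto
        then show False using m \<open>m \<le> n\<close> by auto
      qed
      then show "y \<in> (\<Union>m. E m)" by blast
    qed
    have closedE: "closed (E m)" for m
    proof -
      have o: "open {y::cantor. y (prod_encode (n, h n)) \<and> (\<forall>k<h n. \<not> y (prod_encode (n, k)))}" for n
      proof -
        have eq: "{y::cantor. y (prod_encode (n, h n)) \<and> (\<forall>k<h n. \<not> y (prod_encode (n, k)))} =
          {y. y (prod_encode (n, h n)) \<in> {True}} \<inter> (\<Inter>k\<in>{..<h n}. {y. y (prod_encode (n, k)) \<in> {False}})"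
          by auto
        show ?thesis unfolding eq
          by (intro open_Int open_INT finite_lessThan ballI open_coord) (simp_all add: open_discrete)
      qed
      have "E m = (\<Inter>n\<in>{m..}. - {y::cantor. y (prod_encode (n, h n)) \<and> (\<forall>k<h n. \<not> y (prod_encode (n, k)))})"
        unfolding E_def by auto
      then show ?thesis using o by (simp add: closed_INT open_closed closed_Compl)
    qed
    have intE: "interior (E m) = {}" for m
    proof (rule ccontr)
      assume "interior (E m) \<noteq> {}"
      then obtain z where "z \<in> interior (E m)" by auto
      then obtain l where l: "cyl (pre z l) \<subseteq> interior (E m)" using cyl_base[of "interior (E m)" z] by auto
      define n where "n = max m l"
      define y where "y j = (if j < l then z j else j = prod_encode (n, h n))" for j
      have "y \<in> cyl (pre z l)" unfolding y_def cyl_pre_iff by simp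
      then have yE: "y \<in> E m" using l interior_subset by blast
      have ge: "l \<le> prod_encode (n, k)" for k using le_prod_encode_1[of n k] unfolding n_def by simp
      have A1: "y (prod_encode (n, h n))" using ge[of "h n"] unfolding y_def by simp
      have A2: "\<forall>k<h n. \<not> y (prod_encode (n, k))"
      proof (intro allI impI)
        fix k assume "k < h n"
        have "\<not> prod_encode (n, k) < l" using ge[of k] by simp
        moreover have "prod_encode (n, k) \<noteq> prod_encode (n, h n)" using \<open>k < h n\<close> by (simp add: prod_encode_eq)
        ultimately show "\<not> y (prod_encode (n, k))" unfolding y_def by simp
      qed
      have "m \<le> n" by (simp add: n_def)
      with yE have "\<not> (y (prod_encode (n, h n)) \<and> (\<forall>k<h n. \<not> y (prod_encode (n, k))))"
        unfolding E_def by blast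
      with A1 A2 show False by blast
    qed
    have "nowhere_dense (E m)" for m
      unfolding nowhere_dense_def using closedE intE by (simp add: closure_closed)
    then show ?thesis unfolding meager_def using sub by blast
  qed
  have "(\<Union>x\<in>X. section_at H x) \<noteq> UNIV" using R Hb Hm unfolding R_set_def by blast
  then obtain y where y: "\<And>x. x \<in> X \<Longrightarrow> y \<notin> section_at H x" by blast
  have "infinite {n. f x n = \<psi> y n}" if "x \<in> X" for x
  proof
    assume fin: "finite {n. f x n = \<psi> y n}"
    then obtain m where "\<forall>n\<in>{n. f x n = \<psi> y n}. n < m" using finite_nat_set_iff_bounded by blast
    then have "(x, y) \<in> H" unfolding H_def by (auto intro!: exI[of _ m] simp: not_less[symmetric])
    then show False using y[OF that] by (simp add: section_at_def)
  qed
  then show ?thesis by blast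
qed

lemma two_imp_roth:
  fixes X :: "cantor set" and F :: "cantor \<Rightarrow> 'p::polish_space"
  assumes P2: "\<forall>f::cantor \<Rightarrow> nat \<Rightarrow> nat. f \<in> borel_measurable borel \<longrightarrow> (\<exists>g. \<forall>x\<in>X. infinite {n. f x n = g n})"
    and Fb: "F \<in> borel_measurable borel"
  shows "rothberger (F ` X)"
  unfolding rothberger_def
proof (intro allI impI)
  fix G :: "nat \<Rightarrow> 'p set set"
  assume hyp: "\<forall>n. G n \<noteq> {} \<and> (\<forall>U\<in>G n. open U) \<and> F ` X \<subseteq> \<Union> (G n)"
  have exC: "\<exists>C. C \<subseteq> G n \<and> countable C \<and> C \<noteq> {} \<and> \<Union>C = \<Union>(G n)" for n
  proof -
    obtain C where C: "C \<subseteq> G n" "countable C" "\<Union>C = \<Union>(G n)"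
      using Lindelof[of "G n"] hyp by blast
    obtain U0 where U0: "U0 \<in> G n" using hyp by blast
    have "insert U0 C \<subseteq> G n" using C U0 by blast
    moreover have "countable (insert U0 C)" using C by simp
    moreover have "\<Union>(insert U0 C) = \<Union>(G n)" using C U0 by blast
    ultimately show ?thesis by (intro exI[of _ "insert U0 C"]) simp
  qed
  have "\<forall>n. \<exists>C. C \<subseteq> G n \<and> countable C \<and> C \<noteq> {} \<and> \<Union>C = \<Union>(G n)" using exC by blast
  from choice[OF this] obtain C :: "nat \<Rightarrow> 'p set set" where
    C0: "\<forall>n. C n \<subseteq> G n \<and> countable (C n) \<and> C n \<noteq> {} \<and> \<Union>(C n) = \<Union>(G n)"
    by blast
  have C: "C n \<subseteq> G n \<and> countable (C n) \<and> C n \<noteq> {} \<and> \<Union>(C n) = \<Union>(G n)" for n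
    using C0 by blast
  define U where "U n k = from_nat_into (C n) k" for n k
  have rU: "range (U n) = C n" for n unfolding U_def using C[of n] by (simp add: range_from_nat_into)
  define f where "f x n = (if \<exists>k. F x \<in> U n k then LEAST k. F x \<in> U n k else 0)" for x n
  have [measurable]: "Measurable.pred borel (\<lambda>x. F x \<in> U n k)" for n k
  proof -
    have "U n k \<in> range (U n)" by simp
    then have "U n k \<in> C n" using rU[of n] by simp
    then have "U n k \<in> G n" using C[of n] by blast
    then have "open (U n k)" using hyp by blast
    then have "F -` U n k \<inter> space borel \<in> sets borel" by (intro measurable_sets[OF Fb]) simp
    then show ?thesis by (simp add: pred_def vimage_def)
  qed
  have fm: "(\<lambda>x. f x n) \<in> borel \<rightarrow>\<^sub>M count_space UNIV" for n
    unfolding f_def by measurable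
  have "f \<in> borel_measurable borel" by (rule fun_meas[OF fm])
  from P2[rule_format, OF this] obtain g where g: "\<forall>x\<in>X. infinite {n. f x n = g n}" by blast
  define V where "V n = U n (g n)" for n
  have "V n \<in> G n" for n unfolding V_def using rU[of n] C[of n] by blast
  moreover have "F ` X \<subseteq> (\<Union>n. V n)"
  proof
    fix z assume "z \<in> F ` X"
    then obtain x where x: "x \<in> X" "z = F x" by blast
    then obtain n where n: "f x n = g n" using g not_finite_existsD by blast
    have "F x \<in> \<Union>(G n)" using hyp x by blast
    then have "F x \<in> \<Union>(range (U n))" using rU[of n] C[of n] by simp
    then have ex: "\<exists>k. F x \<in> U n k" by blast
    have "f x n = (LEAST k. F x \<in> U n k)" unfolding f_def using ex by simp
    moreover have "F x \<in> U n (LEAST k. F x \<in> U n k)" by (rule LeastI_ex[OF ex])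
    ultimately have "F x \<in> U n (f x n)" by simp
    then show "z \<in> (\<Union>n. V n)" using n x unfolding V_def by auto
  qed
  ultimately show "\<exists>U. (\<forall>n. U n \<in> G n) \<and> F ` X \<subseteq> (\<Union>n. U n)" by blast
qed

lemma dist_nat_half: "dist (real a) (real b) < 1/2 \<Longrightarrow> a = b"
proof (rule ccontr)
  assume d: "dist (real a) (real b) < 1/2" and "a \<noteq> b"
  then consider "a < b" | "b < a" by linarith
  then show False
  proof cases
    case 1 then have "real a + 1 \<le> real b" by simp
    then show False using d by (simp add: dist_real_def)
  next
    case 2 then have "real b + 1 \<le> real a" by simp
    then show False using d by (simp add: dist_real_def)
  qed
qed

lemma roth_real_imp_two:
  fixes X :: "cantor set" and f :: "cantor \<Rightarrow> nat \<Rightarrow> nat"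
  assumes RR: "\<forall>F :: cantor \<Rightarrow> (nat \<Rightarrow> real). F \<in> borel_measurable borel \<longrightarrow> rothberger (F ` X)"
    and fb: "f \<in> borel_measurable borel"
  shows "\<exists>g. \<forall>x\<in>X. infinite {n. f x n = g n}"
proof -
  define F where "F x = (\<lambda>n. real (f x n))" for x
  have "F \<in> borel_measurable borel" unfolding F_def
  proof (rule measurable_coordinatewise_then_product)
    fix n
    have rm: "real \<in> count_space UNIV \<rightarrow>\<^sub>M (borel :: real measure)" by simp
    have eq: "real \<circ> (\<lambda>x. f x n) = (\<lambda>x. real (f x n))" by (rule ext) simp
    from measurable_comp[OF coord_meas[OF fb, of n] rm]
    show "(\<lambda>x. real (f x n)) \<in> borel_measurable borel" unfolding eq .
  qed
  with RR have roth: "rothberger (F ` X)" by blast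
  define V where "V q k = {z :: nat \<Rightarrow> real. z q \<in> ball (real k) (1/2)}" for q k :: nat
  have openV: "open (V q k)" for q k unfolding V_def by (rule open_coord) simp
  have coverV: "F x \<in> V q (f x q)" for x q unfolding V_def F_def by simp
  have exU: "\<exists>UU. (\<forall>n. UU n \<in> range (V (prod_encode (j, n)))) \<and> F ` X \<subseteq> (\<Union>n. UU n)" for j
  proof -
    have hh: "range (V (prod_encode (j, n))) \<noteq> {} \<and> (\<forall>U\<in>range (V (prod_encode (j, n))). open U) \<and>
        F ` X \<subseteq> \<Union>(range (V (prod_encode (j, n))))" for n
      using openV coverV by blast
    show ?thesis using roth[unfolded rothberger_def, rule_format, OF hh] .
  qed
  have "\<forall>j. \<exists>UU. (\<forall>n. UU n \<in> range (V (prod_encode (j, n)))) \<and> F ` X \<subseteq> (\<Union>n. UU n)"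
    using exU by blast
  from choice[OF this] obtain UU :: "nat \<Rightarrow> nat \<Rightarrow> (nat \<Rightarrow> real) set" where
    UU0: "\<forall>j. (\<forall>n. UU j n \<in> range (V (prod_encode (j, n)))) \<and> F ` X \<subseteq> (\<Union>n. UU j n)"
    by blast
  have UU: "(\<forall>n. UU j n \<in> range (V (prod_encode (j, n)))) \<and> F ` X \<subseteq> (\<Union>n. UU j n)" for j
    using UU0 by blast
  define kk where "kk j n = (SOME k. UU j n = V (prod_encode (j, n)) k)" for j n
  have kk: "UU j n = V (prod_encode (j, n)) (kk j n)" for j n
  proof -
    have "\<exists>k. UU j n = V (prod_encode (j, n)) k" using UU[of j] by blast
    then show ?thesis unfolding kk_def by (rule someI_ex)
  qed
  define g where "g q = kk (fst (prod_decode q)) (snd (prod_decode q))" for q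
  have "infinite {n. f x n = g n}" if x: "x \<in> X" for x
    unfolding infinite_nat_iff_unbounded_le
  proof
    fix j
    obtain n where "F x \<in> UU j n" using UU[of j] x by blast
    then have "F x \<in> V (prod_encode (j, n)) (kk j n)" using kk by simp
    then have "dist (real (f x (prod_encode (j, n)))) (real (kk j n)) < 1/2"
      unfolding V_def F_def by (simp add: dist_commute)
    then have "f x (prod_encode (j, n)) = g (prod_encode (j, n))"
      unfolding g_def using dist_nat_half by simp
    moreover have "j \<le> prod_encode (j, n)" by (rule le_prod_encode_1)
    ultimately show "\<exists>q\<ge>j. q \<in> {n. f x n = g n}" by blast
  qed
  then show ?thesis by blast
qed

theorem theorem2p3:
  fixes X :: "(nat \<Rightarrow> bool) set"
  shows "(R_set X \<longleftrightarrow>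
           (\<forall>f :: (nat \<Rightarrow> bool) \<Rightarrow> (nat \<Rightarrow> nat). f \<in> borel_measurable borel \<longrightarrow>
              (\<exists>g :: nat \<Rightarrow> nat. \<forall>x\<in>X. infinite {n. f x n = g n})))
       \<and> (R_set X \<longrightarrow>
           (\<forall>F :: (nat \<Rightarrow> bool) \<Rightarrow> 'p::polish_space. F \<in> borel_measurable borel \<longrightarrow>
              rothberger (F ` X)))
       \<and> ((\<forall>F :: (nat \<Rightarrow> bool) \<Rightarrow> (nat \<Rightarrow> real). F \<in> borel_measurable borel \<longrightarrow>
              rothberger (F ` X)) \<longrightarrow> R_set X)"
proof (intro conjI)
  show "R_set X \<longleftrightarrow>
           (\<forall>f :: (nat \<Rightarrow> bool) \<Rightarrow> (nat \<Rightarrow> nat). f \<in> borel_measurable borel \<longrightarrow>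
              (\<exists>g :: nat \<Rightarrow> nat. \<forall>x\<in>X. infinite {n. f x n = g n}))"
    using R_imp_two two_imp_R by blast
next
  show "R_set X \<longrightarrow>
           (\<forall>F :: (nat \<Rightarrow> bool) \<Rightarrow> 'p::polish_space. F \<in> borel_measurable borel \<longrightarrow>
              rothberger (F ` X))"
  proof (intro impI allI)
    fix F :: "(nat \<Rightarrow> bool) \<Rightarrow> 'p::polish_space"
    assume R: "R_set X" and Fb: "F \<in> borel_measurable borel"
    have P2: "\<forall>f :: (nat \<Rightarrow> bool) \<Rightarrow> (nat \<Rightarrow> nat). f \<in> borel_measurable borel \<longrightarrow>
              (\<exists>g :: nat \<Rightarrow> nat. \<forall>x\<in>X. infinite {n. f x n = g n})"
      using R_imp_two[OF R] by blast
    show "rothberger (F ` X)" by (rule two_imp_roth[OF P2 Fb])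
  qed
next
  show "(\<forall>F :: (nat \<Rightarrow> bool) \<Rightarrow> (nat \<Rightarrow> real). F \<in> borel_measurable borel \<longrightarrow>
              rothberger (F ` X)) \<longrightarrow> R_set X"
  proof
    assume RR: "\<forall>F :: (nat \<Rightarrow> bool) \<Rightarrow> (nat \<Rightarrow> real). F \<in> borel_measurable borel \<longrightarrow>
              rothberger (F ` X)"
    have P2: "\<forall>f :: (nat \<Rightarrow> bool) \<Rightarrow> (nat \<Rightarrow> nat). f \<in> borel_measurable borel \<longrightarrow>
              (\<exists>g :: nat \<Rightarrow> nat. \<forall>x\<in>X. infinite {n. f x n = g n})"
      using roth_real_imp_two[OF RR] by blast
    show "R_set X" by (rule two_imp_R[OF P2])
  qed
qed


end
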